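(* Consider the multiobjective proximal gradient (MPG) algorithm described in the context, applied to the problem $\min_{x\in\mathbb{R}^n} F(x)$ under the standing assumptions (i)–(iii). Then the MPG algorithm is well defined (that is, at any iteration $k$ at which it does not stop, the line search of Step 3 terminates after finitely many trial step sizes, so $x^{k+1}$ is defined), and it stops at iteration $k$ if and only if $x^k$ is a weakly Pareto optimal point of the problem.
   Context: Let $F:\mathbb{R}^n\to(\mathbb{R}\cup\{+\infty\})^m$, $F=(F_1,\ldots,F_m)$, with $F_j=G_j+H_j$ for $j=1,\ldots,m$, where: (i) each $G_j:\mathbb{R}^n\to\mathbb{R}$ is continuously differentiable and convex; (ii) each $H_j:\mathbb{R}^n\to\mathbb{R}\cup\{+\infty\}$ is proper, convex and continuous on its domain $\mathrm{dom}(H_j)$; (iii) $\mathrm{dom}(F):=\{x: F_j(x)<+\infty\ \forall j\}$ is nonempty and closed. For $u,v\in\mathbb{R}^m$, $u\preceq v$ means $u_j\le v_j$ for all $j$, and $u\prec v$ means $u_j<v_j$ for all $j$. A point $\bar x$ is weakly Pareto optimal if there is no $x\in\mathbb{R}^n$ with $F(x)\prec F(\bar x)$. For $x\in\mathrm{dom}(F)$ and $\alpha>0$ define $\psi_x(u):=\max_{j=1,\ldots,m}\big(\nabla G_j(x)^\top(u-x)+H_j(u)-H_j(x)\big)$, $p_\alpha(x):=\arg\min_{u\in\mathbb{R}^n}\psi_x(u)+\frac{1}{2\alpha}\|u-x\|^2$ (unique minimizer), and $\theta_\alpha(x):=\psi_x(p_\alpha(x))+\frac{1}{2\alpha}\|p_\alpha(x)-x\|^2$.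 MPG algorithm. Step 0: choose $x^0\in\mathrm{dom}(F)$, $\alpha>0$, $\gamma\in(0,2/\alpha)$, $0<\tau_1<\tau_2<1$; set $k=0$. Step 1: compute $p^k:=p_\alpha(x^k)$ and $\theta_\alpha(x^k)$. Step 2: if $\theta_\alpha(x^k)=0$, stop. Step 3: set $d^k:=p^k-x^k$, take $j_k^*\in\arg\max_{j}\nabla G_j(x^k)^\top d^k$, set $t=1$. Step 3.1: if $G_{j_k^*}(x^k+td^k)\le G_{j_k^*}(x^k)+t\nabla G_{j_k^*}(x^k)^\top d^k+t\frac{\gamma}{2}\|d^k\|^2$, go to Step 3.2; otherwise replace $t$ by some value in $[\tau_1 t,\tau_2 t]$ and repeat Step 3.1. Step 3.2: if $F(x^k+td^k)\preceq F(x^k)$, set $t_k=t$ and go to Step 4. Step 3.3: replace $t$ by some value in $[\tau_1 t,\tau_2 t]$; if $G_j(x^k+td^k)\le G_j(x^k)+t\nabla G_j(x^k)^\top d^k+t\frac{\gamma}{2}\|d^k\|^2$ for all $j=1,\ldots,m$, set $t_k=t$ and go to Step 4; otherwise repeat Step 3.3. Step 4: $x^{k+1}:=x^k+t_kd^k$, $k\leftarrow k+1$, go to Step 1. *)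

theory Defs
  imports "HOL-Analysis.Analysis"
begin

text \<open>Objectives are indexed by j in {..<m}. Each extended-valued H_j is represented
  by a real function H j together with its effective domain domH j; outside domH j
  the value of H_j is +infinity.\<close>

definition domF :: "nat \<Rightarrow> (nat \<Rightarrow> 'a set) \<Rightarrow> 'a set" where
  "domF m domH = (\<Inter>j\<in>{..<m}. domH j)"

definition Fext :: "(nat \<Rightarrow> 'a \<Rightarrow> real) \<Rightarrow> (nat \<Rightarrow> 'a \<Rightarrow> real) \<Rightarrow> (nat \<Rightarrow> 'a set)
    \<Rightarrow> nat \<Rightarrow> 'a \<Rightarrow> ereal" where
  "Fext G H domH j x = (if x \<in> domH j then ereal (G j x + H j x) else \<infinity>)"

definition weakly_pareto :: "nat \<Rightarrow> (nat \<Rightarrow> 'a \<Rightarrow> real) \<Rightarrow> (nat \<Rightarrow> 'a \<Rightarrow> real)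
    \<Rightarrow> (nat \<Rightarrow> 'a set) \<Rightarrow> 'a \<Rightarrow> bool" where
  "weakly_pareto m G H domH xb \<longleftrightarrow>
     \<not> (\<exists>x. \<forall>j<m. Fext G H domH j x < Fext G H domH j xb)"

text \<open>psi_x(u) = max_j (grad G_j(x)^T (u - x) + H_j(u) - H_j(x)), +infinity if u is outside
  some dom H_j (x is always taken in dom F).\<close>
definition psi :: "nat \<Rightarrow> (nat \<Rightarrow> 'a \<Rightarrow> 'a::real_inner) \<Rightarrow> (nat \<Rightarrow> 'a \<Rightarrow> real)
    \<Rightarrow> (nat \<Rightarrow> 'a set) \<Rightarrow> 'a \<Rightarrow> 'a \<Rightarrow> ereal" where
  "psi m gradG H domH x u =
     Max ((\<lambda>j. if u \<in> domH j then ereal (gradG j x \<bullet> (u - x) + H j u - H j x) else \<infinity>) ` {..<m})"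

definition prox_obj :: "nat \<Rightarrow> (nat \<Rightarrow> 'a \<Rightarrow> 'a::real_inner) \<Rightarrow> (nat \<Rightarrow> 'a \<Rightarrow> real)
    \<Rightarrow> (nat \<Rightarrow> 'a set) \<Rightarrow> real \<Rightarrow> 'a \<Rightarrow> 'a \<Rightarrow> ereal" where
  "prox_obj m gradG H domH \<alpha> x u = psi m gradG H domH x u + ereal ((norm (u - x))\<^sup>2 / (2 * \<alpha>))"

definition prox_pt :: "nat \<Rightarrow> (nat \<Rightarrow> 'a \<Rightarrow> 'a::real_inner) \<Rightarrow> (nat \<Rightarrow> 'a \<Rightarrow> real)
    \<Rightarrow> (nat \<Rightarrow> 'a set) \<Rightarrow> real \<Rightarrow> 'a \<Rightarrow> 'a" where
  "prox_pt m gradG H domH \<alpha> x =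
     (THE u. \<forall>v. prox_obj m gradG H domH \<alpha> x u \<le> prox_obj m gradG H domH \<alpha> x v)"

definition theta :: "nat \<Rightarrow> (nat \<Rightarrow> 'a \<Rightarrow> 'a::real_inner) \<Rightarrow> (nat \<Rightarrow> 'a \<Rightarrow> real)
    \<Rightarrow> (nat \<Rightarrow> 'a set) \<Rightarrow> real \<Rightarrow> 'a \<Rightarrow> ereal" where
  "theta m gradG H domH \<alpha> x = prox_obj m gradG H domH \<alpha> x (prox_pt m gradG H domH \<alpha> x)"

text \<open>Descent-type test used in Steps 3.1 and 3.3 for objective j.\<close>
definition armijo :: "(nat \<Rightarrow> 'a \<Rightarrow> real) \<Rightarrow> (nat \<Rightarrow> 'a \<Rightarrow> 'a::real_inner) \<Rightarrow> real
    \<Rightarrow> nat \<Rightarrow> 'a \<Rightarrow> 'a \<Rightarrow> real \<Rightarrow> bool" where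
  "armijo G gradG \<gamma> j x d t \<longleftrightarrow>
     G j (x + t *\<^sub>R d) \<le> G j x + t * (gradG j x \<bullet> d) + t * (\<gamma> / 2) * (norm d)\<^sup>2"

definition backtrack_seq :: "real \<Rightarrow> real \<Rightarrow> real \<Rightarrow> (nat \<Rightarrow> real) \<Rightarrow> bool" where
  "backtrack_seq \<tau>1 \<tau>2 t0 ts \<longleftrightarrow>
     ts 0 = t0 \<and> (\<forall>i. \<tau>1 * ts i \<le> ts (Suc i) \<and> ts (Suc i) \<le> \<tau>2 * ts i)"

end

theory Submission imports Defs begin
lemma dir_tendsto:
  fixes g :: "'a::euclidean_space \<Rightarrow> real"
  assumes "(g has_derivative (\<lambda>h. gr \<bullet> h)) (at x)"
  shows "((\<lambda>t. (g (x + t *\<^sub>R d) - g x) / t) \<longlongrightarrow> gr \<bullet> d) (at 0)"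
proof -
  have l: "((\<lambda>t. x + t *\<^sub>R d) has_derivative (\<lambda>t. t *\<^sub>R d)) (at 0)"
    by (auto intro!: derivative_eq_intros)
  have D1: "((\<lambda>t. g (x + t *\<^sub>R d)) has_derivative (\<lambda>t. gr \<bullet> (t *\<^sub>R d))) (at 0)"
    using has_derivative_compose[OF l, of g "\<lambda>h. gr \<bullet> h"] assms by (simp add: o_def)
  have eq: "(\<lambda>t. gr \<bullet> (t *\<^sub>R d)) = (*) (gr \<bullet> d)" by (auto simp: fun_eq_iff)
  have "((\<lambda>t. g (x + t *\<^sub>R d)) has_derivative (*) (gr \<bullet> d)) (at 0)"
    using D1 unfolding eq .
  hence "((\<lambda>t. g (x + t *\<^sub>R d)) has_field_derivative (gr \<bullet> d)) (at 0)"
    by (simp add: has_field_derivative_def)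
  thus ?thesis by (simp add: has_field_derivative_iff)
qed

lemma dir_upper:
  fixes g :: "'a::euclidean_space \<Rightarrow> real"
  assumes "(g has_derivative (\<lambda>h. gr \<bullet> h)) (at x)" "e > 0"
  shows "eventually (\<lambda>t. g (x + t *\<^sub>R d) \<le> g x + t * (gr \<bullet> d) + t * e) (at_right 0)"
proof -
  have "eventually (\<lambda>t. dist ((g (x + t *\<^sub>R d) - g x) / t) (gr \<bullet> d) < e) (at 0)"
    using tendstoD[OF dir_tendsto[OF assms(1), of d] assms(2)] .
  hence "eventually (\<lambda>t. dist ((g (x + t *\<^sub>R d) - g x) / t) (gr \<bullet> d) < e) (at_right 0)"
    by (rule filter_leD[OF at_within_le_at])
  moreover have "eventually (\<lambda>t::real. t > 0) (at_right 0)"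
    by (simp add: eventually_at_right_less)
  ultimately show ?thesis
  proof eventually_elim
    case (elim t)
    hence "(g (x + t *\<^sub>R d) - g x) / t < gr \<bullet> d + e" by (auto simp: dist_real_def)
    hence "g (x + t *\<^sub>R d) - g x < t * (gr \<bullet> d + e)" using elim by (simp add: field_simps)
    thus ?case by (simp add: algebra_simps)
  qed
qed

lemma dir_lower:
  fixes g :: "'a::euclidean_space \<Rightarrow> real"
  assumes "(g has_derivative (\<lambda>h. gr \<bullet> h)) (at x)" "e > 0"
  shows "eventually (\<lambda>t. g x + t * (gr \<bullet> d) - t * e \<le> g (x + t *\<^sub>R d)) (at_right 0)"
proof -
  have "eventually (\<lambda>t. dist ((g (x + t *\<^sub>R d) - g x) / t) (gr \<bullet> d) < e) (at 0)"
    using tendstoD[OF dir_tendsto[OF assms(1), of d] assms(2)] .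
  hence "eventually (\<lambda>t. dist ((g (x + t *\<^sub>R d) - g x) / t) (gr \<bullet> d) < e) (at_right 0)"
    by (rule filter_leD[OF at_within_le_at])
  moreover have "eventually (\<lambda>t::real. t > 0) (at_right 0)"
    by (simp add: eventually_at_right_less)
  ultimately show ?thesis
  proof eventually_elim
    case (elim t)
    hence "gr \<bullet> d - e < (g (x + t *\<^sub>R d) - g x) / t" by (auto simp: dist_real_def)
    hence "t * (gr \<bullet> d - e) < g (x + t *\<^sub>R d) - g x" using elim by (simp add: field_simps)
    thus ?case by (simp add: algebra_simps)
  qed
qed

lemma grad_ineq:
  fixes g :: "'a::euclidean_space \<Rightarrow> real"
  assumes "(g has_derivative (\<lambda>h. gr \<bullet> h)) (at x)" "convex_on UNIV g"
  shows "gr \<bullet> (y - x) \<le> g y - g x"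
proof (rule field_le_epsilon)
  fix e :: real assume e: "e > 0"
  obtain b where b: "b > 0" "\<And>t. t > 0 \<Longrightarrow> t < b \<Longrightarrow> g x + t * (gr \<bullet> (y - x)) - t * e \<le> g (x + t *\<^sub>R (y - x))"
    using dir_lower[OF assms(1) e, of "y - x"] unfolding eventually_at_right_field by auto
  define t where "t = min (b/2) 1"
  have t: "t > 0" "t < b" "t \<le> 1" using b by (auto simp: t_def)
  have "g (x + t *\<^sub>R (y - x)) = g ((1 - t) *\<^sub>R x + t *\<^sub>R y)" by (simp add: algebra_simps)
  also have "\<dots> \<le> (1 - t) * g x + t * g y"
    using convex_onD[OF assms(2)] t by simp
  finally have "g x + t * (gr \<bullet> (y - x)) - t * e \<le> (1 - t) * g x + t * g y" using b(2)[OF t(1,2)] by linarith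
  hence "t * (gr \<bullet> (y - x)) \<le> t * (g y - g x + e)" by (simp add: algebra_simps)
  thus "gr \<bullet> (y - x) \<le> g y - g x + e" using t by simp
qed


lemma bseq_pos:
  assumes "backtrack_seq \<tau>1 \<tau>2 t0 ts" "0 < \<tau>1" "\<tau>1 < \<tau>2" "\<tau>2 < 1" "0 < t0"
  shows "0 < ts i \<and> ts i \<le> t0 \<and> ts i \<le> \<tau>2 ^ i * t0"
proof (induction i)
  case 0 thus ?case using assms unfolding backtrack_seq_def by simp
next
  case (Suc i)
  have a: "\<tau>1 * ts i \<le> ts (Suc i)" "ts (Suc i) \<le> \<tau>2 * ts i" using assms(1) unfolding backtrack_seq_def by auto
  have "0 < \<tau>1 * ts i" using Suc assms by simp
  moreover have c2: "\<tau>2 * ts i \<le> ts i" using Suc assms by (intro mult_left_le_one_le) auto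
  moreover have c3: "\<tau>2 * ts i \<le> \<tau>2 ^ Suc i * t0" using Suc assms by (simp add: mult_left_mono mult.assoc)
  ultimately show ?case using a Suc by linarith
qed

lemma bseq_ev:
  assumes "backtrack_seq \<tau>1 \<tau>2 t0 ts" "0 < \<tau>1" "\<tau>1 < \<tau>2" "\<tau>2 < 1" "0 < t0"
    and "eventually P (at_right 0)"
  shows "eventually (\<lambda>i. P (ts i)) sequentially"
proof -
  have b: "\<And>i. 0 < ts i \<and> ts i \<le> \<tau>2 ^ i * t0" using bseq_pos[OF assms(1-5)] by auto
  have "(\<lambda>i. \<tau>2 ^ i * t0) \<longlonglongrightarrow> 0 * t0"
    using assms by (intro tendsto_intros) auto
  hence "ts \<longlonglongrightarrow> 0"
    using b by (intro tendsto_sandwich[of "\<lambda>_. 0" ts sequentially "\<lambda>i. \<tau>2 ^ i * t0"]) 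
       (auto intro: always_eventually less_imp_le)
  hence "filterlim ts (at_right 0) sequentially"
    using b by (intro tendsto_imp_filterlim_at_right) (auto intro: always_eventually)
  thus ?thesis using assms(6) filterlim_iff by blast
qed

lemma cont_Max:
  fixes f :: "'i \<Rightarrow> 'a::topological_space \<Rightarrow> real"
  assumes "finite A" "A \<noteq> {}" "\<forall>j\<in>A. continuous_on S (f j)"
  shows "continuous_on S (\<lambda>x. Max ((\<lambda>j. f j x) ` A))"
  using assms
proof (induction A rule: finite_ne_induct)
  case (singleton a) thus ?case by simp
next
  case (insert a A)
  have "(\<lambda>x. Max ((\<lambda>j. f j x) ` insert a A)) = (\<lambda>x. max (f a x) (Max ((\<lambda>j. f j x) ` A)))"
    using insert by (auto simp: fun_eq_iff)
  thus ?case using insert by (auto intro!: continuous_on_max)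
qed

lemma norm_mid:
  fixes u v x :: "'a::real_inner"
  shows "(norm ((1/2) *\<^sub>R u + (1/2) *\<^sub>R v - x))\<^sup>2 = ((norm (u - x))\<^sup>2 + (norm (v - x))\<^sup>2) / 2 - (norm (u - v))\<^sup>2 / 4"
  by (simp add: power2_norm_eq_inner inner_simps inner_commute algebra_simps) (simp add: field_simps)


lemma arith1: "(a::real) \<le> 1/2*b + 1/2*c \<Longrightarrow> q = (r + s)/2 - w \<Longrightarrow> a + q \<le> (b + r + (c + s))/2 - w"
  by (simp add: field_simps)

locale mpg =
  fixes m :: nat and G H :: "nat \<Rightarrow> 'a::euclidean_space \<Rightarrow> real"
    and gradG :: "nat \<Rightarrow> 'a \<Rightarrow> 'a" and domH :: "nat \<Rightarrow> 'a set" and \<alpha> :: real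
  assumes m_pos: "0 < m"
    and G_grad: "\<forall>j<m. \<forall>x. (G j has_derivative (\<lambda>h. gradG j x \<bullet> h)) (at x)"
    and G_convex: "\<forall>j<m. convex_on UNIV (G j)"
    and H_convex: "\<forall>j<m. convex_on (domH j) (H j)"
    and H_cont: "\<forall>j<m. continuous_on (domH j) (H j)"
    and domF_closed: "closed (domF m domH)"
    and alpha_pos: "0 < \<alpha>"
begin

abbreviation D where "D \<equiv> domF m domH"
definition phi where "phi x u j = gradG j x \<bullet> (u - x) + H j u - H j x"
definition gR where "gR x u = Max ((\<lambda>j. phi x u j) ` {..<m})"
definition fR where "fR x u = gR x u + (norm (u - x))\<^sup>2 / (2 * \<alpha>)"

lemma inD: "u \<in> D \<longleftrightarrow> (\<forall>j<m. u \<in> domH j)" by (auto simp: domF_def)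

lemma convex_D: "convex D"
  unfolding domF_def by (rule convex_INT) (use H_convex convex_on_imp_convex in auto)

lemma psi_in: assumes u: "u \<in> D" shows "psi m gradG H domH x u = ereal (gR x u)"
proof -
  have "(\<lambda>j. if u \<in> domH j then ereal (gradG j x \<bullet> (u - x) + H j u - H j x) else \<infinity>) ` {..<m}
      = (\<lambda>j. ereal (phi x u j)) ` {..<m}"
    using u by (intro image_cong) (auto simp: inD phi_def)
  also have "\<dots> = ereal ` ((\<lambda>j. phi x u j) ` {..<m})" by (simp add: image_image)
  finally have e: "(\<lambda>j. if u \<in> domH j then ereal (gradG j x \<bullet> (u - x) + H j u - H j x) else \<infinity>) ` {..<m}
      = ereal ` ((\<lambda>j. phi x u j) ` {..<m})" .
  have "mono ereal" by (auto simp: mono_def)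
  hence "ereal (gR x u) = Max (ereal ` ((\<lambda>j. phi x u j) ` {..<m}))"
    unfolding gR_def using m_pos by (intro mono_Max_commute) auto
  thus ?thesis unfolding psi_def e by simp
qed

lemma psi_out: assumes u: "u \<notin> D" shows "psi m gradG H domH x u = \<infinity>"
proof -
  obtain j where j: "j < m" "u \<notin> domH j" using u by (auto simp: inD)
  have "\<infinity> \<in> (\<lambda>j. if u \<in> domH j then ereal (gradG j x \<bullet> (u - x) + H j u - H j x) else \<infinity>) ` {..<m}"
    using j by (auto simp: image_iff intro!: bexI[of _ j])
  hence "\<infinity> \<le> psi m gradG H domH x u" unfolding psi_def by (intro Max_ge) auto
  thus ?thesis by simp
qed

lemma prox_in: "u \<in> D \<Longrightarrow> prox_obj m gradG H domH \<alpha> x u = ereal (fR x u)"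
  by (simp add: prox_obj_def psi_in fR_def)

lemma prox_out: "u \<notin> D \<Longrightarrow> prox_obj m gradG H domH \<alpha> x u = \<infinity>"
  by (simp add: prox_obj_def psi_out)

lemma phi_le_gR: "j < m \<Longrightarrow> phi x u j \<le> gR x u"
  unfolding gR_def by (rule Max_ge) auto

lemma gR_le: "(\<forall>j<m. phi x u j \<le> c) \<Longrightarrow> gR x u \<le> c"
  unfolding gR_def using m_pos by (subst Max_le_iff) auto

lemma gR_self: "gR x x = 0"
proof -
  have "gR x x \<le> 0" by (rule gR_le) (simp add: phi_def)
  moreover have "phi x x 0 \<le> gR x x" using m_pos by (intro phi_le_gR)
  ultimately show ?thesis by (simp add: phi_def)
qed

lemma fR_self: "fR x x = 0" by (simp add: fR_def gR_self)

lemma gR_convex: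
  assumes u: "u \<in> D" and v: "v \<in> D" and t: "0 \<le> t" "t \<le> 1"
  shows "gR x ((1-t) *\<^sub>R u + t *\<^sub>R v) \<le> (1-t) * gR x u + t * gR x v"
proof (rule gR_le, intro allI impI)
  fix j assume j: "j < m"
  have H: "H j ((1-t) *\<^sub>R u + t *\<^sub>R v) \<le> (1-t) * H j u + t * H j v"
    using convex_onD[OF H_convex[rule_format, OF j]] u v t j by (auto simp: inD)
  have I: "gradG j x \<bullet> ((1-t) *\<^sub>R u + t *\<^sub>R v - x) = (1-t) * (gradG j x \<bullet> (u - x)) + t * (gradG j x \<bullet> (v - x))"
    by (simp add: inner_simps algebra_simps)
  have "phi x ((1-t) *\<^sub>R u + t *\<^sub>R v) j \<le> (1-t) * phi x u j + t * phi x v j"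
    using H I by (simp add: phi_def algebra_simps)
  also have "\<dots> \<le> (1-t) * gR x u + t * gR x v"
    by (intro add_mono mult_left_mono phi_le_gR) (use j t in auto)
  finally show "phi x ((1-t) *\<^sub>R u + t *\<^sub>R v) j \<le> (1-t) * gR x u + t * gR x v" .
qed

lemma gR_cont: "continuous_on D (gR x)"
proof -
  have "continuous_on D (\<lambda>u. Max ((\<lambda>j. phi x u j) ` {..<m}))"
  proof (rule cont_Max[of "{..<m}" D "\<lambda>j u. phi x u j"], use m_pos in auto)
    fix j assume j: "j < m"
    have "D \<subseteq> domH j" using j by (auto simp: inD)
    hence "continuous_on D (H j)" using H_cont j continuous_on_subset by blast
    thus "continuous_on D (\<lambda>u. phi x u j)" unfolding phi_def by (intro continuous_intros)
  qed
  thus ?thesis unfolding gR_def[abs_def] .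
qed

lemma fR_cont: "continuous_on D (fR x)"
  unfolding fR_def[abs_def] using gR_cont[of x] alpha_pos by (intro continuous_intros) auto


lemma exists_min:
  assumes x: "x \<in> D" shows "\<exists>p\<in>D. \<forall>v\<in>D. fR x p \<le> fR x v"
proof -
  define K where "K r = D \<inter> cball x r" for r
  have K: "compact (K r)" for r unfolding K_def using domF_closed by (simp add: closed_Int_compact)
  have xK: "0 \<le> r \<Longrightarrow> x \<in> K r" for r using x by (auto simp: K_def)
  have Ksub: "K r \<subseteq> D" for r by (auto simp: K_def)
  obtain w1 where w1: "w1 \<in> K 1" "\<forall>y\<in>K 1. gR x w1 \<le> gR x y"
    using continuous_attains_inf[OF K, of 1 "gR x"] xK[of 1] continuous_on_subset[OF gR_cont Ksub] by auto
  define g1 where "g1 = gR x w1"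
  have growth: "norm (u - x) * g1 \<le> gR x u" if u: "u \<in> D" and R1: "1 \<le> norm (u - x)" for u
  proof -
    define R where "R = norm (u - x)"
    define s where "s = 1 / R"
    have R: "1 \<le> R" using R1 by (simp add: R_def)
    have s: "0 < s" "s \<le> 1" using R by (auto simp: s_def)
    define w where "w = (1 - s) *\<^sub>R x + s *\<^sub>R u"
    have wD: "w \<in> D" unfolding w_def using convexD_alt[OF convex_D x u] s by auto
    have "w - x = s *\<^sub>R (u - x)" by (simp add: w_def algebra_simps)
    hence "dist x w = 1" using R s by (simp add: dist_norm norm_minus_commute R_def[symmetric] s_def)
    hence "w \<in> K 1" using wD by (auto simp: K_def)
    hence "g1 \<le> gR x w" using w1 by (auto simp: g1_def)
    also have "\<dots> \<le> (1 - s) * gR x x + s * gR x u" unfolding w_def using gR_convex[OF x u] s by auto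
    also have "\<dots> = s * gR x u" by (simp add: gR_self)
    finally have "R * g1 \<le> R * (s * gR x u)" using R by (intro mult_left_mono) auto
    also have "\<dots> = gR x u" using R by (simp add: s_def)
    finally show ?thesis by (simp add: R_def)
  qed
  define \<rho> where "\<rho> = max 1 (-2*\<alpha>*g1)"
  have far: "0 < fR x u" if u: "u \<in> D" and R1: "\<rho> < norm (u - x)" for u
  proof -
    define R where "R = norm (u - x)"
    have R: "1 \<le> R" "-2*\<alpha>*g1 < R" using R1 by (auto simp: R_def \<rho>_def)
    have "-g1 < R / (2*\<alpha>)" using R(2) alpha_pos by (simp add: field_simps)
    hence "0 < R * (g1 + R / (2*\<alpha>))" using R by (intro mult_pos_pos) auto
    also have "\<dots> = R * g1 + R\<^sup>2 / (2*\<alpha>)" by (simp add: field_simps power2_eq_square)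
    also have "\<dots> \<le> fR x u" using growth[OF u] R by (simp add: fR_def R_def mult.commute)
    finally show ?thesis .
  qed
  have \<rho>0: "0 \<le> \<rho>" by (simp add: \<rho>_def)
  have Kne: "K \<rho> \<noteq> {}" using xK[OF \<rho>0] by auto
  obtain p where p: "p \<in> K \<rho>" "\<forall>y\<in>K \<rho>. fR x p \<le> fR x y"
    using continuous_attains_inf[OF K Kne continuous_on_subset[OF fR_cont Ksub]] by blast
  have "\<forall>v\<in>D. fR x p \<le> fR x v"
  proof
    fix v assume v: "v \<in> D"
    show "fR x p \<le> fR x v"
    proof (cases "norm (v - x) \<le> \<rho>")
      case True
      hence "v \<in> K \<rho>" using v by (auto simp: K_def dist_norm norm_minus_commute)
      thus ?thesis using p by auto
    next
      case False
      hence "0 < fR x v" using far v by auto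
      moreover have "fR x p \<le> fR x x" using p xK[OF \<rho>0] by auto
      ultimately show ?thesis by (simp add: fR_self)
    qed
  qed
  moreover have "p \<in> D" using p(1) Ksub by blast
  ultimately show ?thesis by blast
qed

lemma fR_mid:
  assumes x: "x \<in> D" and u: "u \<in> D" and v: "v \<in> D"
  shows "fR x ((1/2) *\<^sub>R u + (1/2) *\<^sub>R v) \<le> (fR x u + fR x v) / 2 - (norm (u - v))\<^sup>2 / (8 * \<alpha>)"
proof -
  have g: "gR x ((1/2) *\<^sub>R u + (1/2) *\<^sub>R v) \<le> (1/2) * gR x u + (1/2) * gR x v"
    using gR_convex[OF u v, of "1/2" x] by simp
  have e: "(((norm (u - x))\<^sup>2 + (norm (v - x))\<^sup>2) / 2 - (norm (u - v))\<^sup>2 / 4) / (2 * \<alpha>)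
     = ((norm (u - x))\<^sup>2 / (2 * \<alpha>) + (norm (v - x))\<^sup>2 / (2 * \<alpha>)) / 2 - (norm (u - v))\<^sup>2 / (8 * \<alpha>)"
    using alpha_pos by (simp add: field_simps)
  show ?thesis unfolding fR_def norm_mid by (rule arith1[OF g e])
qed

lemma min_in_D:
  assumes x: "x \<in> D" and u: "\<forall>v. prox_obj m gradG H domH \<alpha> x u \<le> prox_obj m gradG H domH \<alpha> x v"
  shows "u \<in> D"
proof (rule ccontr)
  assume "u \<notin> D"
  hence "prox_obj m gradG H domH \<alpha> x u = \<infinity>" by (rule prox_out)
  moreover have "prox_obj m gradG H domH \<alpha> x x = ereal 0" using x by (simp add: prox_in fR_self)
  ultimately show False using u[rule_format, of x] by simp
qed

lemma unique_min:
  assumes x: "x \<in> D"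
  shows "\<exists>!u. \<forall>v. prox_obj m gradG H domH \<alpha> x u \<le> prox_obj m gradG H domH \<alpha> x v"
proof (rule ex_ex1I)
  obtain p where p: "p \<in> D" "\<forall>v\<in>D. fR x p \<le> fR x v" using exists_min[OF x] by auto
  show "\<exists>u. \<forall>v. prox_obj m gradG H domH \<alpha> x u \<le> prox_obj m gradG H domH \<alpha> x v"
  proof (intro exI allI)
    fix v show "prox_obj m gradG H domH \<alpha> x p \<le> prox_obj m gradG H domH \<alpha> x v"
      using p by (cases "v \<in> D") (auto simp: prox_in prox_out)
  qed
next
  fix u1 u2
  assume a1: "\<forall>v. prox_obj m gradG H domH \<alpha> x u1 \<le> prox_obj m gradG H domH \<alpha> x v"
     and a2: "\<forall>v. prox_obj m gradG H domH \<alpha> x u2 \<le> prox_obj m gradG H domH \<alpha> x v"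
  have D1: "u1 \<in> D" and D2: "u2 \<in> D" using min_in_D[OF x] a1 a2 by auto
  have l1: "\<forall>v\<in>D. fR x u1 \<le> fR x v"
  proof
    fix v assume "v \<in> D" thus "fR x u1 \<le> fR x v" using a1[rule_format, of v] D1 by (simp add: prox_in)
  qed
  have l2: "\<forall>v\<in>D. fR x u2 \<le> fR x v"
  proof
    fix v assume "v \<in> D" thus "fR x u2 \<le> fR x v" using a2[rule_format, of v] D2 by (simp add: prox_in)
  qed
  show "u1 = u2"
  proof (rule ccontr)
    assume ne: "u1 \<noteq> u2"
    have "0 < (norm (u1 - u2))\<^sup>2 / (8 * \<alpha>)" using ne alpha_pos by auto
    moreover have mD: "(1/2) *\<^sub>R u1 + (1/2) *\<^sub>R u2 \<in> D"
      using convexD[OF convex_D D1 D2, of "1/2" "1/2"] by simp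
    moreover have "fR x u1 = fR x u2" using l1 l2 D1 D2 by (meson order_antisym)
    ultimately have "fR x ((1/2) *\<^sub>R u1 + (1/2) *\<^sub>R u2) < fR x u1"
      using fR_mid[OF x D1 D2] by simp
    thus False using l1 mD by fastforce
  qed
qed

lemma pp:
  assumes x: "x \<in> D"
  shows "prox_pt m gradG H domH \<alpha> x \<in> D"
    and "\<forall>v\<in>D. fR x (prox_pt m gradG H domH \<alpha> x) \<le> fR x v"
    and "theta m gradG H domH \<alpha> x = ereal (fR x (prox_pt m gradG H domH \<alpha> x))"
proof -
  have a: "\<forall>v. prox_obj m gradG H domH \<alpha> x (prox_pt m gradG H domH \<alpha> x) \<le> prox_obj m gradG H domH \<alpha> x v"
    unfolding prox_pt_def by (rule theI'[OF unique_min[OF x]])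
  show pD: "prox_pt m gradG H domH \<alpha> x \<in> D" by (rule min_in_D[OF x a])
  show "\<forall>v\<in>D. fR x (prox_pt m gradG H domH \<alpha> x) \<le> fR x v"
  proof
    fix v assume "v \<in> D" thus "fR x (prox_pt m gradG H domH \<alpha> x) \<le> fR x v"
      using a[rule_format, of v] pD by (simp add: prox_in)
  qed
  show "theta m gradG H domH \<alpha> x = ereal (fR x (prox_pt m gradG H domH \<alpha> x))"
    unfolding theta_def using pD by (simp add: prox_in)
qed


lemma Fext_in: "j < m \<Longrightarrow> x \<in> D \<Longrightarrow> Fext G H domH j x = ereal (G j x + H j x)"
  by (simp add: Fext_def inD)

lemma fR_ge_gR: "gR x u \<le> fR x u"
  unfolding fR_def using alpha_pos by simp

lemma neg_imp_not_wp:
  assumes x: "x \<in> D" and neg: "fR x (prox_pt m gradG H domH \<alpha> x) < 0"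
  shows "\<not> weakly_pareto m G H domH x"
proof -
  define p where "p = prox_pt m gradG H domH \<alpha> x"
  define d where "d = p - x"
  have pD: "p \<in> D" using pp(1)[OF x] by (simp add: p_def)
  have gneg: "gR x p < 0" using neg fR_ge_gR[of x p] by (simp add: p_def)
  have phineg: "phi x p j < 0" if "j < m" for j using phi_le_gR[OF that, of x p] gneg by simp
  have "\<forall>j\<in>{..<m}. eventually (\<lambda>t. G j (x + t *\<^sub>R d) \<le> G j x + t * (gradG j x \<bullet> d) + t * (- phi x p j / 2)) (at_right 0)"
  proof
    fix j assume "j \<in> {..<m}"
    hence j: "j < m" by simp
    show "eventually (\<lambda>t. G j (x + t *\<^sub>R d) \<le> G j x + t * (gradG j x \<bullet> d) + t * (- phi x p j / 2)) (at_right 0)"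
      using G_grad j phineg[OF j] by (intro dir_upper) auto
  qed
  hence "eventually (\<lambda>t. \<forall>j\<in>{..<m}. G j (x + t *\<^sub>R d) \<le> G j x + t * (gradG j x \<bullet> d) + t * (- phi x p j / 2)) (at_right 0)"
    by (rule eventually_ball_finite[rotated]) simp
  then obtain b where b: "b > 0" "\<And>t. 0 < t \<Longrightarrow> t < b \<Longrightarrow> \<forall>j\<in>{..<m}. G j (x + t *\<^sub>R d) \<le> G j x + t * (gradG j x \<bullet> d) + t * (- phi x p j / 2)"
    unfolding eventually_at_right_field by auto
  define t where "t = min (b/2) (1/2)"
  have t: "0 < t" "t < b" "t \<le> 1" using b by (auto simp: t_def)
  define z where "z = x + t *\<^sub>R d"
  have z: "z = (1 - t) *\<^sub>R x + t *\<^sub>R p" by (simp add: z_def d_def algebra_simps)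
  have zD: "z \<in> D" unfolding z using convexD_alt[OF convex_D x pD] t by auto
  have "\<forall>j<m. Fext G H domH j z < Fext G H domH j x"
  proof (intro allI impI)
    fix j assume j: "j < m"
    have Hz: "H j z \<le> (1 - t) * H j x + t * H j p"
      unfolding z using convex_onD[OF H_convex[rule_format, OF j]] x pD t j by (auto simp: inD)
    have Gz: "G j z \<le> G j x + t * (gradG j x \<bullet> d) + t * (- phi x p j / 2)"
      using b(2)[OF t(1,2)] j by (simp add: z_def)
    have ph: "phi x p j = gradG j x \<bullet> d + H j p - H j x" by (simp add: phi_def d_def)
    have "t * phi x p j < 0" using t phineg[OF j] by (simp add: mult_pos_neg)
    moreover have e1: "t * phi x p j = t * (gradG j x \<bullet> d) + t * H j p - t * H j x" unfolding ph by (simp add: algebra_simps)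
    moreover have e2: "(1 - t) * H j x = H j x - t * H j x" by (simp add: algebra_simps)
    moreover have e3: "t * (- phi x p j / 2) = - (t * phi x p j) / 2" by simp
    ultimately have "G j z + H j z < G j x + H j x" using Hz Gz by linarith
    thus "Fext G H domH j z < Fext G H domH j x" using j x zD by (simp add: Fext_in)
  qed
  thus ?thesis unfolding weakly_pareto_def by blast
qed

lemma not_wp_imp_neg:
  assumes x: "x \<in> D" and nwp: "\<not> weakly_pareto m G H domH x"
  shows "fR x (prox_pt m gradG H domH \<alpha> x) < 0"
proof -
  obtain y where y: "\<forall>j<m. Fext G H domH j y < Fext G H domH j x"
    using nwp unfolding weakly_pareto_def by blast
  have yD: "y \<in> D"
  proof -
    have "y \<in> domH j" if j: "j < m" for j
    proof (rule ccontr)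
      assume "y \<notin> domH j"
      hence "Fext G H domH j y = \<infinity>" by (simp add: Fext_def)
      thus False using y j by auto
    qed
    thus ?thesis by (simp add: inD)
  qed
  have Fy: "G j y + H j y < G j x + H j x" if "j < m" for j
    using y that x yD by (auto simp: Fext_in)
  define M where "M = Max ((\<lambda>j. (G j y + H j y) - (G j x + H j x)) ` {..<m})"
  have "M \<in> (\<lambda>j. (G j y + H j y) - (G j x + H j x)) ` {..<m}"
    unfolding M_def using m_pos by (intro Max_in) auto
  hence Mneg: "M < 0" using Fy by auto
  have leM: "(G j y + H j y) - (G j x + H j x) \<le> M" if "j < m" for j
    unfolding M_def using that by (intro Max_ge) auto
  define v where "v = y - x"
  define N where "N = (norm v)\<^sup>2"
  have N0: "0 \<le> N" by (simp add: N_def)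
  define t where "t = min 1 (- M * \<alpha> / (N + 1))"
  have c0: "0 < - M * \<alpha> / (N + 1)" using Mneg alpha_pos N0 by (intro divide_pos_pos mult_pos_pos) auto
  have t: "0 < t" "t \<le> 1" "t \<le> - M * \<alpha> / (N + 1)" using c0 by (auto simp: t_def)
  define z where "z = x + t *\<^sub>R v"
  have z: "z = (1 - t) *\<^sub>R x + t *\<^sub>R y" by (simp add: z_def v_def algebra_simps)
  have zD: "z \<in> D" unfolding z using convexD_alt[OF convex_D x yD] t by auto
  have "gR x z \<le> t * M"
  proof (rule gR_le, intro allI impI)
    fix j assume j: "j < m"
    have Hz: "H j z \<le> (1 - t) * H j x + t * H j y"
      unfolding z using convex_onD[OF H_convex[rule_format, OF j]] x yD t j by (auto simp: inD)
    have gi: "gradG j x \<bullet> v \<le> G j y - G j x"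
      unfolding v_def using G_grad G_convex j by (intro grad_ineq) auto
    have "phi x z j = t * (gradG j x \<bullet> v) + H j z - H j x" by (simp add: phi_def z_def inner_simps)
    also have "\<dots> \<le> t * (G j y - G j x) + t * (H j y - H j x)"
      using Hz mult_left_mono[OF gi, of t] t by (simp add: algebra_simps)
    also have "\<dots> = t * ((G j y + H j y) - (G j x + H j x))" by (simp add: algebra_simps)
    also have "\<dots> \<le> t * M" using leM[OF j] t by (intro mult_left_mono) auto
    finally show "phi x z j \<le> t * M" .
  qed
  moreover have "(norm (z - x))\<^sup>2 = t\<^sup>2 * N"
    using t by (simp add: z_def N_def power_mult_distrib)
  ultimately have fz: "fR x z \<le> t * M + t\<^sup>2 * N / (2 * \<alpha>)" by (simp add: fR_def)
  have "t * N \<le> (- M * \<alpha> / (N + 1)) * N" using t N0 by (intro mult_right_mono) auto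
  also have "\<dots> \<le> (- M * \<alpha> / (N + 1)) * (N + 1)" using c0 by (intro mult_left_mono) auto
  also have "\<dots> = - M * \<alpha>" using N0 by simp
  finally have tN: "t * N \<le> - M * \<alpha>" .
  have "t * N / (2 * \<alpha>) \<le> - M / 2" using tN alpha_pos by (simp add: field_simps)
  hence "M + t * N / (2 * \<alpha>) < 0" using Mneg by linarith
  hence "t * (M + t * N / (2 * \<alpha>)) < 0" using t by (simp add: mult_pos_neg)
  hence "t * M + t\<^sup>2 * N / (2 * \<alpha>) < 0" by (simp add: algebra_simps power2_eq_square)
  hence "fR x z < 0" using fz by linarith
  moreover have "fR x (prox_pt m gradG H domH \<alpha> x) \<le> fR x z" using pp(2)[OF x] zD by blast
  ultimately show ?thesis by linarith
qed

lemma theta_iff: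
  assumes x: "x \<in> D"
  shows "theta m gradG H domH \<alpha> x = 0 \<longleftrightarrow> weakly_pareto m G H domH x"
proof -
  have le: "fR x (prox_pt m gradG H domH \<alpha> x) \<le> 0" using pp(2)[OF x] x fR_self[of x] by metis
  show ?thesis
    using pp(3)[OF x] le neg_imp_not_wp[OF x] not_wp_imp_neg[OF x] zero_ereal_def
    by (metis ereal.inject order_less_le)
qed

lemma theta_ne_d:
  assumes x: "x \<in> D" and th: "theta m gradG H domH \<alpha> x \<noteq> 0"
  shows "prox_pt m gradG H domH \<alpha> x - x \<noteq> 0"
proof
  assume "prox_pt m gradG H domH \<alpha> x - x = 0"
  hence "prox_pt m gradG H domH \<alpha> x = x" by simp
  thus False using th pp(3)[OF x] by (simp add: fR_self zero_ereal_def)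
qed

lemma armijo_ev:
  assumes j: "j < m" and d: "d \<noteq> 0" and g: "0 < \<gamma>"
  shows "eventually (\<lambda>t. armijo G gradG \<gamma> j x d t) (at_right 0)"
proof -
  have e: "0 < \<gamma> / 2 * (norm d)\<^sup>2" using d g by simp
  show ?thesis
    using dir_upper[of "G j" "gradG j x" x, OF _ e, of d] G_grad j
    by (auto simp: armijo_def mult.assoc elim!: eventually_mono)
qed

end

theorem mainTheorem1:
  fixes m :: nat
    and G H :: "nat \<Rightarrow> 'a::euclidean_space \<Rightarrow> real"
    and gradG :: "nat \<Rightarrow> 'a \<Rightarrow> 'a"
    and domH :: "nat \<Rightarrow> 'a set"
    and \<alpha> \<gamma> \<tau>1 \<tau>2 :: real
  assumes m_pos: "0 < m"
    and G_grad: "\<forall>j<m. \<forall>x. (G j has_derivative (\<lambda>h. gradG j x \<bullet> h)) (at x)"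
    and G_C1: "\<forall>j<m. continuous_on UNIV (gradG j)"
    and G_convex: "\<forall>j<m. convex_on UNIV (G j)"
    and H_proper: "\<forall>j<m. domH j \<noteq> {}"
    and H_convex: "\<forall>j<m. convex_on (domH j) (H j)"
    and H_cont: "\<forall>j<m. continuous_on (domH j) (H j)"
    and domF_ne: "domF m domH \<noteq> {}"
    and domF_closed: "closed (domF m domH)"
    and alpha_pos: "0 < \<alpha>"
    and gamma: "0 < \<gamma>" "\<gamma> < 2 / \<alpha>"
    and tau: "0 < \<tau>1" "\<tau>1 < \<tau>2" "\<tau>2 < 1"
  shows
    "(\<forall>x\<in>domF m domH. \<exists>!u. \<forall>v. prox_obj m gradG H domH \<alpha> x u \<le> prox_obj m gradG H domH \<alpha> x v)
     \<and> (\<forall>x\<in>domF m domH. theta m gradG H domH \<alpha> x = 0 \<longleftrightarrow> weakly_pareto m G H domH x)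
     \<and> (\<forall>x\<in>domF m domH. theta m gradG H domH \<alpha> x \<noteq> 0 \<longrightarrow>
          (let d = prox_pt m gradG H domH \<alpha> x - x in
           \<forall>js. js < m \<and> (\<forall>i<m. gradG i x \<bullet> d \<le> gradG js x \<bullet> d) \<longrightarrow>
           (\<forall>ts. backtrack_seq \<tau>1 \<tau>2 1 ts \<longrightarrow>
              (\<exists>i. armijo G gradG \<gamma> js x d (ts i)) \<and>
              (let t = ts (LEAST i. armijo G gradG \<gamma> js x d (ts i)) in
                 (\<forall>j<m. Fext G H domH j (x + t *\<^sub>R d) \<le> Fext G H domH j x) \<or>
                 (\<forall>ss. backtrack_seq \<tau>1 \<tau>2 t ss \<longrightarrow>
                    (\<exists>i>0. \<forall>j<m. armijo G gradG \<gamma> j x d (ss i)) \<and>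
                    x + ss (LEAST i. 0 < i \<and> (\<forall>j<m. armijo G gradG \<gamma> j x d (ss i))) *\<^sub>R d
                      \<in> domF m domH)))))"
proof -
  interpret mpg m G H gradG domH \<alpha>
    unfolding mpg_def using m_pos G_grad G_convex H_convex H_cont domF_closed alpha_pos by blast
  show ?thesis
  proof (intro conjI ballI impI)
    fix x assume x: "x \<in> domF m domH"
    show "\<exists>!u. \<forall>v. prox_obj m gradG H domH \<alpha> x u \<le> prox_obj m gradG H domH \<alpha> x v"
      by (rule unique_min[OF x])
  next
    fix x assume x: "x \<in> domF m domH"
    show "theta m gradG H domH \<alpha> x = 0 \<longleftrightarrow> weakly_pareto m G H domH x"
      by (rule theta_iff[OF x])
  next
    fix x assume x: "x \<in> domF m domH" and th: "theta m gradG H domH \<alpha> x \<noteq> 0"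
    define p where "p = prox_pt m gradG H domH \<alpha> x"
    define d where "d = p - x"
    have pD: "p \<in> D" using pp(1)[OF x] by (simp add: p_def)
    have dne: "d \<noteq> 0" using theta_ne_d[OF x th] by (simp add: d_def p_def)
    have one: "(0::real) < 1" by simp
    have inD': "x + s *\<^sub>R d \<in> D" if "0 \<le> s" "s \<le> 1" for s
    proof -
      have "x + s *\<^sub>R d = (1 - s) *\<^sub>R x + s *\<^sub>R p" by (simp add: d_def algebra_simps)
      thus ?thesis using convexD_alt[OF convex_D x pD] that by simp
    qed
    have evall: "eventually (\<lambda>s. \<forall>j\<in>{..<m}. armijo G gradG \<gamma> j x d s) (at_right 0)"
      by (rule eventually_ball_finite) (use armijo_ev[OF _ dne gamma(1)] in auto)
    show "let d = prox_pt m gradG H domH \<alpha> x - x in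
           \<forall>js. js < m \<and> (\<forall>i<m. gradG i x \<bullet> d \<le> gradG js x \<bullet> d) \<longrightarrow>
           (\<forall>ts. backtrack_seq \<tau>1 \<tau>2 1 ts \<longrightarrow>
              (\<exists>i. armijo G gradG \<gamma> js x d (ts i)) \<and>
              (let t = ts (LEAST i. armijo G gradG \<gamma> js x d (ts i)) in
                 (\<forall>j<m. Fext G H domH j (x + t *\<^sub>R d) \<le> Fext G H domH j x) \<or>
                 (\<forall>ss. backtrack_seq \<tau>1 \<tau>2 t ss \<longrightarrow>
                    (\<exists>i>0. \<forall>j<m. armijo G gradG \<gamma> j x d (ss i)) \<and>
                    x + ss (LEAST i. 0 < i \<and> (\<forall>j<m. armijo G gradG \<gamma> j x d (ss i))) *\<^sub>R d
                      \<in> domF m domH)))"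
      unfolding Let_def p_def[symmetric] d_def[symmetric]
    proof (intro allI impI)
      fix js ts assume js: "js < m \<and> (\<forall>i<m. gradG i x \<bullet> d \<le> gradG js x \<bullet> d)"
        and ts: "backtrack_seq \<tau>1 \<tau>2 1 ts"
      have "eventually (\<lambda>i. armijo G gradG \<gamma> js x d (ts i)) sequentially"
        using bseq_ev[OF ts tau one armijo_ev[OF _ dne gamma(1)]] js by blast
      then obtain N where "\<forall>n\<ge>N. armijo G gradG \<gamma> js x d (ts n)"
        unfolding eventually_sequentially by blast
      hence ex: "\<exists>i. armijo G gradG \<gamma> js x d (ts i)" by blast
      define t where "t = ts (LEAST i. armijo G gradG \<gamma> js x d (ts i))"
      have t: "0 < t" "t \<le> 1" using bseq_pos[OF ts tau one] by (auto simp: t_def)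
      have B: "\<forall>ss. backtrack_seq \<tau>1 \<tau>2 t ss \<longrightarrow>
                    (\<exists>i>0. \<forall>j<m. armijo G gradG \<gamma> j x d (ss i)) \<and>
                    x + ss (LEAST i. 0 < i \<and> (\<forall>j<m. armijo G gradG \<gamma> j x d (ss i))) *\<^sub>R d
                      \<in> domF m domH"
      proof (intro allI impI)
        fix ss assume ss: "backtrack_seq \<tau>1 \<tau>2 t ss"
        have "eventually (\<lambda>i. \<forall>j\<in>{..<m}. armijo G gradG \<gamma> j x d (ss i)) sequentially"
          by (rule bseq_ev[OF ss tau t(1) evall])
        then obtain N where N: "\<forall>n\<ge>N. \<forall>j\<in>{..<m}. armijo G gradG \<gamma> j x d (ss n)"
          unfolding eventually_sequentially by blast
        have ex2: "\<exists>i>0. \<forall>j<m. armijo G gradG \<gamma> j x d (ss i)"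
          using N by (intro exI[of _ "Suc N"]) auto
        define k where "k = (LEAST i. 0 < i \<and> (\<forall>j<m. armijo G gradG \<gamma> j x d (ss i)))"
        have s: "0 < ss k" "ss k \<le> t" using bseq_pos[OF ss tau t(1)] by auto
        have "x + ss k *\<^sub>R d \<in> D" using s t by (intro inD') auto
        thus "(\<exists>i>0. \<forall>j<m. armijo G gradG \<gamma> j x d (ss i)) \<and>
                    x + ss (LEAST i. 0 < i \<and> (\<forall>j<m. armijo G gradG \<gamma> j x d (ss i))) *\<^sub>R d
                      \<in> domF m domH" using ex2 by (simp add: k_def)
      qed
      show "(\<exists>i. armijo G gradG \<gamma> js x d (ts i)) \<and>
              ((\<forall>j<m. Fext G H domH j (x + ts (LEAST i. armijo G gradG \<gamma> js x d (ts i)) *\<^sub>R d) \<le> Fext G H domH j x) \<or>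
                 (\<forall>ss. backtrack_seq \<tau>1 \<tau>2 (ts (LEAST i. armijo G gradG \<gamma> js x d (ts i))) ss \<longrightarrow>
                    (\<exists>i>0. \<forall>j<m. armijo G gradG \<gamma> j x d (ss i)) \<and>
                    x + ss (LEAST i. 0 < i \<and> (\<forall>j<m. armijo G gradG \<gamma> j x d (ss i))) *\<^sub>R d
                      \<in> domF m domH))"
        using ex B unfolding t_def by blast
    qed
  qed
qed

end
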